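(* Let $\eta$ satisfy (A1) and (A2). Then $\lambda_{crit}(\eta)\ge0$, and: if $\lambda<\lambda_{crit}(\eta)$ then $\Phi_k(\lambda)(i,j)<\infty$ for all $i,j\in[d]$ and $k\in\mathbb Z$, $\eta$-a.s.; if $\lambda>\lambda_{crit}(\eta)$ then $\Phi_k(\lambda)(i,j)=\infty$ for all $i,j\in[d]$ and $k\in\mathbb Z$, $\eta$-a.s.
   Context: Setting. Fix $d\ge1$, $[d]=\{1,\dots,d\}$. $\Sigma$ is the set of triples $(q,r,p)$ of nonnegative $d\times d$ matrices with $(q+r+p)\mathbf 1=\mathbf 1$; $\Omega=\Sigma^{\mathbb Z}$, $\omega_n=(q_n,r_n,p_n)$, shift $(\theta\omega)_k=\omega_{k+1}$. For $\omega\in\Omega$, $P^{(x,i)}_\omega$ is the law of the Markov chain $(X_n,Y_n)$ on $\mathbb Z\times[d]$ started at $(x,i)$ which from $(k,i)$ jumps to $(k-1,j)$, $(k,j)$, $(k+1,j)$ with probabilities $q_k(i,j)$, $r_k(i,j)$, $p_k(i,j)$; $E^{(x,i)}_\omega$ its expectation; $T_x=\inf\{n\ge0:X_n=x\}$. For $\kappa>0$, $\Sigma_\kappa$ is the set of $(q,r,p)\in\Sigma$ with $\sum_jq(i,j)\ge\kappa$, $\sum_jp(i,j)\ge\kappa$ for all $i$, and $((I-r)^{-1}q)(i,j)\ge\kappa$, $((I-r)^{-1}p)(i,j)\ge\kappa$ for all $i,j$; $\Omega_\kappa=\Sigma_\kappa^{\mathbb Z}$. (A1): $\eta$ is stationary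 and ergodic under $\theta$. (A2): $\eta(\Omega_\kappa)=1$ for some $\kappa>0$. $\Phi_k(\lambda)$ is the $d\times d$ matrix with $\Phi_k(\lambda)(i,j)=E^{(k,i)}_\omega[e^{\lambda T_{k+1}}\mathbf 1\{T_{k+1}<\infty,Y_{T_{k+1}}=j\}]\in[0,\infty]$, and $\lambda_{crit}(\eta)=\sup\{\lambda:\eta(\max_i\sum_j\Phi_0(\lambda)(i,j)<\infty)=1\}$. *)

theory Defs
  imports "HOL-Probability.Probability"
begin

text \<open>The index set [d] is a finite type 'd (so d = CARD('d) \<ge> 1).
  A site configuration is a triple (q, r, p) of d x d real matrices.\<close>

type_synonym 'd site = "(real^'d^'d) \<times> (real^'d^'d) \<times> (real^'d^'d)"
type_synonym 'd env = "int \<Rightarrow> 'd site"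

definition Sigma_set :: "'d::finite site set" where
  "Sigma_set = {(q, r, p). (\<forall>i j. q $ i $ j \<ge> 0 \<and> r $ i $ j \<ge> 0 \<and> p $ i $ j \<ge> 0)
      \<and> (\<forall>i. (\<Sum>j\<in>UNIV. q $ i $ j + r $ i $ j + p $ i $ j) = 1)}"

definition Sigma_kappa :: "real \<Rightarrow> 'd::finite site set" where
  "Sigma_kappa \<kappa> = {(q, r, p). (q, r, p) \<in> Sigma_set
      \<and> (\<forall>i. (\<Sum>j\<in>UNIV. q $ i $ j) \<ge> \<kappa> \<and> (\<Sum>j\<in>UNIV. p $ i $ j) \<ge> \<kappa>)
      \<and> (\<forall>i j. (matrix_inv (mat 1 - r) ** q) $ i $ j \<ge> \<kappa>
             \<and> (matrix_inv (mat 1 - r) ** p) $ i $ j \<ge> \<kappa>)}"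

definition env_space :: "'d::finite env measure" where
  "env_space = PiM UNIV (\<lambda>_. borel)"

definition shift :: "'d env \<Rightarrow> 'd env" where
  "shift \<omega> = (\<lambda>k. \<omega> (k + 1))"

definition stationary_ergodic :: "'d::finite env measure \<Rightarrow> bool" where
  "stationary_ergodic \<eta> \<longleftrightarrow>
     shift \<in> \<eta> \<rightarrow>\<^sub>M \<eta> \<and> distr \<eta> \<eta> shift = \<eta>
     \<and> (\<forall>A\<in>sets \<eta>. shift -` A \<inter> space \<eta> = A \<longrightarrow> measure \<eta> A = 0 \<or> measure \<eta> A = 1)"

definition qm :: "'d env \<Rightarrow> int \<Rightarrow> real^'d^'d" where "qm \<omega> x = fst (\<omega> x)"
definition rm :: "'d env \<Rightarrow> int \<Rightarrow> real^'d^'d" where "rm \<omega> x = fst (snd (\<omega> x))"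
definition pm :: "'d env \<Rightarrow> int \<Rightarrow> real^'d^'d" where "pm \<omega> x = snd (snd (\<omega> x))"

text \<open>hitp \<omega> t n x i j = P_\<omega>^{(x,i)} (T_t = n, Y_n = j), where T_t = inf{n \<ge> 0. X_n = t},
  defined via the first-step (Markov) decomposition of the path law.\<close>
primrec hitp :: "'d::finite env \<Rightarrow> int \<Rightarrow> nat \<Rightarrow> int \<Rightarrow> 'd \<Rightarrow> 'd \<Rightarrow> real" where
  "hitp \<omega> t 0 x i j = (if x = t \<and> i = j then 1 else 0)"
| "hitp \<omega> t (Suc n) x i j = (if x = t then 0 else
      (\<Sum>j'\<in>UNIV. qm \<omega> x $ i $ j' * hitp \<omega> t n (x - 1) j' j
                 + rm \<omega> x $ i $ j' * hitp \<omega> t n x j' j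
                 + pm \<omega> x $ i $ j' * hitp \<omega> t n (x + 1) j' j))"

text \<open>Phi_k(\<lambda>)(i,j) = E^{(k,i)}[e^{\<lambda> T_{k+1}} 1{T_{k+1} < \<infinity>, Y_{T_{k+1}} = j}] \<in> [0,\<infinity>].\<close>
definition Phi :: "'d::finite env \<Rightarrow> int \<Rightarrow> real \<Rightarrow> 'd \<Rightarrow> 'd \<Rightarrow> ennreal" where
  "Phi \<omega> k lam i j = (\<Sum>n. ennreal (exp (lam * real n) * hitp \<omega> (k + 1) n k i j))"

definition lambda_crit :: "'d::finite env measure \<Rightarrow> ereal" where
  "lambda_crit \<eta> = Sup {ereal lam | lam. AE \<omega> in \<eta>. Max (range (\<lambda>i. \<Sum>j\<in>UNIV. Phi \<omega> 0 lam i j)) < \<infinity>}"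

end

theory Submission
  imports Defs
begin


definition SS :: "'d::finite env \<Rightarrow> bool" where "SS \<omega> = (\<forall>n. \<omega> n \<in> Sigma_set)"

lemma site_nonneg:
  assumes "SS \<omega>"
  shows "qm \<omega> x $ i $ j \<ge> 0" "rm \<omega> x $ i $ j \<ge> 0" "pm \<omega> x $ i $ j \<ge> 0"
proof -
  obtain q r p where e: "\<omega> x = (q, r, p)" by (cases "\<omega> x") auto
  have "(q, r, p) \<in> Sigma_set" using assms e unfolding SS_def by metis
  then show "qm \<omega> x $ i $ j \<ge> 0" "rm \<omega> x $ i $ j \<ge> 0" "pm \<omega> x $ i $ j \<ge> 0"
    using e by (auto simp: Sigma_set_def qm_def rm_def pm_def)
qed

lemma site_rowsum:
  assumes "SS \<omega>"
  shows "(\<Sum>j\<in>UNIV. qm \<omega> x $ i $ j + rm \<omega> x $ i $ j + pm \<omega> x $ i $ j) = 1"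
proof -
  obtain q r p where e: "\<omega> x = (q, r, p)" by (cases "\<omega> x") auto
  have "(q, r, p) \<in> Sigma_set" using assms e unfolding SS_def by metis
  then show ?thesis
    using e by (auto simp: Sigma_set_def qm_def rm_def pm_def)
qed

lemma hitp_nonneg: "SS \<omega> \<Longrightarrow> 0 \<le> hitp \<omega> t n x i j"
proof (induction n arbitrary: x i)
  case 0 then show ?case by simp
next
  case (Suc n)
  then show ?case
    by (auto intro!: sum_nonneg add_nonneg_nonneg mult_nonneg_nonneg site_nonneg)
qed

lemma hitp_sum_le1:
  assumes "SS \<omega>"
  shows "(\<Sum>n<N. \<Sum>j\<in>UNIV. hitp \<omega> t n x i j) \<le> 1"
proof (induction N arbitrary: x i)
  case 0 then show ?case by simp
next
  case (Suc N)
  have eq: "(\<Sum>n<Suc N. \<Sum>j\<in>UNIV. hitp \<omega> t n x i j)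
     = (\<Sum>j\<in>UNIV. hitp \<omega> t 0 x i j) + (\<Sum>n<N. \<Sum>j\<in>UNIV. hitp \<omega> t (Suc n) x i j)"
    by (rule sum.lessThan_Suc_shift)
  show ?case
  proof (cases "x = t")
    case True
    then show ?thesis unfolding eq by simp
  next
    case False
    let ?F = "\<lambda>y j'. (\<Sum>n<N. \<Sum>j\<in>UNIV. hitp \<omega> t n y j' j)"
    define f where "f n j j' = qm \<omega> x $ i $ j' * hitp \<omega> t n (x - 1) j' j
                 + rm \<omega> x $ i $ j' * hitp \<omega> t n x j' j
                 + pm \<omega> x $ i $ j' * hitp \<omega> t n (x + 1) j' j" for n j j'
    have "(\<Sum>n<N. \<Sum>j\<in>UNIV. hitp \<omega> t (Suc n) x i j) = (\<Sum>n<N. \<Sum>j\<in>UNIV. \<Sum>j'\<in>UNIV. f n j j')"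
      using False by (simp add: f_def)
    also have "\<dots> = (\<Sum>n<N. \<Sum>j'\<in>UNIV. \<Sum>j\<in>UNIV. f n j j')"
      by (rule sum.cong[OF refl], rule sum.swap)
    also have "\<dots> = (\<Sum>j'\<in>UNIV. \<Sum>n<N. \<Sum>j\<in>UNIV. f n j j')"
      by (rule sum.swap)
    also have "\<dots> = (\<Sum>j'\<in>UNIV. qm \<omega> x $ i $ j' * ?F (x - 1) j' + rm \<omega> x $ i $ j' * ?F x j'
            + pm \<omega> x $ i $ j' * ?F (x + 1) j')"
      by (simp add: f_def sum.distrib sum_distrib_left)
    also have "\<dots> \<le> (\<Sum>j'\<in>UNIV. qm \<omega> x $ i $ j' * 1 + rm \<omega> x $ i $ j' * 1
            + pm \<omega> x $ i $ j' * 1)"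
      by (intro sum_mono add_mono mult_left_mono Suc site_nonneg assms)
    also have "\<dots> = 1" using site_rowsum[OF assms] by simp
    finally show ?thesis unfolding eq using False by simp
  qed
qed

lemma hitp_shift:
  "hitp \<omega> (t + k) n (x + k) i j = hitp (\<lambda>m. \<omega> (m + k)) t n x i j"
proof (induction n arbitrary: x i)
  case 0 then show ?case by simp
next
  case (Suc n)
  have a: "x - 1 + k = x + k - 1" "x + 1 + k = x + k + 1" by simp_all
  show ?case using Suc[of "x - 1"] Suc[of "x + 1"] Suc[of x]
    by (simp add: qm_def rm_def pm_def a)
qed

lemma step_q:
  assumes "SS \<omega>" "x \<noteq> t"
  shows "qm \<omega> x $ i $ j' * hitp \<omega> t n (x - 1) j' j \<le> hitp \<omega> t (Suc n) x i j"
proof -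
  have "qm \<omega> x $ i $ j' * hitp \<omega> t n (x - 1) j' j \<le> qm \<omega> x $ i $ j' * hitp \<omega> t n (x - 1) j' j
        + rm \<omega> x $ i $ j' * hitp \<omega> t n x j' j + pm \<omega> x $ i $ j' * hitp \<omega> t n (x + 1) j' j"
    using assms by (auto intro!: add_nonneg_nonneg mult_nonneg_nonneg site_nonneg hitp_nonneg)
  also have "\<dots> \<le> hitp \<omega> t (Suc n) x i j"
    using assms
    by (simp, intro member_le_sum) (auto intro!: add_nonneg_nonneg mult_nonneg_nonneg site_nonneg hitp_nonneg)
  finally show ?thesis .
qed

lemma step_r:
  assumes "SS \<omega>" "x \<noteq> t"
  shows "rm \<omega> x $ i $ j' * hitp \<omega> t n x j' j \<le> hitp \<omega> t (Suc n) x i j"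
proof -
  have "rm \<omega> x $ i $ j' * hitp \<omega> t n x j' j \<le> qm \<omega> x $ i $ j' * hitp \<omega> t n (x - 1) j' j
        + rm \<omega> x $ i $ j' * hitp \<omega> t n x j' j + pm \<omega> x $ i $ j' * hitp \<omega> t n (x + 1) j' j"
    using assms by (auto intro!: add_nonneg_nonneg mult_nonneg_nonneg site_nonneg hitp_nonneg)
  also have "\<dots> \<le> hitp \<omega> t (Suc n) x i j"
    using assms
    by (simp, intro member_le_sum) (auto intro!: add_nonneg_nonneg mult_nonneg_nonneg site_nonneg hitp_nonneg)
  finally show ?thesis .
qed

lemma step_p:
  assumes "SS \<omega>" "x \<noteq> t"
  shows "pm \<omega> x $ i $ j' * hitp \<omega> t n (x + 1) j' j \<le> hitp \<omega> t (Suc n) x i j"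
proof -
  have "pm \<omega> x $ i $ j' * hitp \<omega> t n (x + 1) j' j \<le> qm \<omega> x $ i $ j' * hitp \<omega> t n (x - 1) j' j
        + rm \<omega> x $ i $ j' * hitp \<omega> t n x j' j + pm \<omega> x $ i $ j' * hitp \<omega> t n (x + 1) j' j"
    using assms by (auto intro!: add_nonneg_nonneg mult_nonneg_nonneg site_nonneg hitp_nonneg)
  also have "\<dots> \<le> hitp \<omega> t (Suc n) x i j"
    using assms
    by (simp, intro member_le_sum) (auto intro!: add_nonneg_nonneg mult_nonneg_nonneg site_nonneg hitp_nonneg)
  finally show ?thesis .
qed

lemma hitp_comp:
  assumes "SS \<omega>" "m < t"
  shows "x \<le> m \<Longrightarrow> hitp \<omega> m n x i b * hitp \<omega> t L m b j \<le> hitp \<omega> t (n + L) x i j"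
proof (induction n arbitrary: x i)
  case 0 then show ?case using hitp_nonneg[OF assms(1)] by auto
next
  case (Suc n)
  show ?case
  proof (cases "x = m")
    case True then show ?thesis using hitp_nonneg[OF assms(1), of t "Suc n + L" x i j] by simp
  next
    case False
    with Suc.prems have xm: "x < m" by simp
    with assms have xt: "x \<noteq> t" by simp
    let ?H = "hitp \<omega> t L m b j"
    have "hitp \<omega> m (Suc n) x i b * ?H
      = (\<Sum>j'\<in>UNIV. qm \<omega> x $ i $ j' * (hitp \<omega> m n (x - 1) j' b * ?H)
          + rm \<omega> x $ i $ j' * (hitp \<omega> m n x j' b * ?H)
          + pm \<omega> x $ i $ j' * (hitp \<omega> m n (x + 1) j' b * ?H))"
      using False by (simp add: sum_distrib_right, intro sum.cong refl, simp add: algebra_simps)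
    also have "\<dots> \<le> (\<Sum>j'\<in>UNIV. qm \<omega> x $ i $ j' * hitp \<omega> t (n + L) (x - 1) j' j
          + rm \<omega> x $ i $ j' * hitp \<omega> t (n + L) x j' j
          + pm \<omega> x $ i $ j' * hitp \<omega> t (n + L) (x + 1) j' j)"
      using xm by (intro sum_mono add_mono mult_left_mono Suc.IH site_nonneg assms(1)) auto
    also have "\<dots> = hitp \<omega> t (Suc n + L) x i j" using xt by simp
    finally show ?thesis .
  qed
qed



inductive rreach :: "real^'d^'d \<Rightarrow> 'd \<Rightarrow> 'd \<Rightarrow> bool" for r where
  rrefl: "rreach r i i"
| rstep: "rreach r i i' \<Longrightarrow> r $ i' $ j > 0 \<Longrightarrow> rreach r i j"

lemma rreach_hitp:
  assumes "SS \<omega>"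
  shows "rreach (rm \<omega> k) i i' \<Longrightarrow> \<exists>m c. c > 0 \<and> (\<forall>n j t. t \<noteq> k \<longrightarrow> c * hitp \<omega> t n k i' j \<le> hitp \<omega> t (n + m) k i j)"
proof (induction rule: rreach.induct)
  case (rrefl i0)
  have A: "\<forall>n j t. t \<noteq> k \<longrightarrow> 1 * hitp \<omega> t n k i0 j \<le> hitp \<omega> t (n + 0) k i0 j" by simp
  show ?case by (rule exI[of _ 0], rule exI[of _ "1::real"], rule conjI[OF zero_less_one A])
next
  case (rstep i0 i' j')
  obtain m c where c: "c > 0" and H0: "\<forall>n j t. t \<noteq> k \<longrightarrow> c * hitp \<omega> t n k i' j \<le> hitp \<omega> t (n + m) k i0 j"
    using rstep.IH by (elim exE conjE)
  note H = H0[rule_format]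
  have pos: "c * rm \<omega> k $ i' $ j' > 0" using c rstep.hyps(2) by simp
  have main: "\<forall>n j t. t \<noteq> k \<longrightarrow> (c * rm \<omega> k $ i' $ j') * hitp \<omega> t n k j' j \<le> hitp \<omega> t (n + Suc m) k i0 j"
  proof (intro allI impI)
    fix n j t assume t: "t \<noteq> k"
    have "c * rm \<omega> k $ i' $ j' * hitp \<omega> t n k j' j = c * (rm \<omega> k $ i' $ j' * hitp \<omega> t n k j' j)" by (rule mult.assoc)
    also have "\<dots> \<le> c * hitp \<omega> t (Suc n) k i' j"
      using c t by (intro mult_left_mono step_r[OF assms]) auto
    also have "\<dots> \<le> hitp \<omega> t (Suc n + m) k i0 j" using H[OF t] .
    also have "Suc n + m = n + Suc m" by simp
    finally show "c * rm \<omega> k $ i' $ j' * hitp \<omega> t n k j' j \<le> hitp \<omega> t (n + Suc m) k i0 j" .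
  qed
  show ?case by (rule exI[of _ "Suc m"], rule exI[of _ "c * rm \<omega> k $ i' $ j'"], rule conjI[OF pos main])
qed

lemma mmult_entry: "((A::real^'n^'m) ** C) $ i $ j = (\<Sum>k\<in>UNIV. A$i$k * C$k$j)"
  by (simp add: matrix_matrix_mult_def)

lemma mat1_sum: "(\<Sum>j\<in>UNIV. mat 1 $ i $ j * (v j::real)) = v i"
proof -
  have "(\<Sum>j\<in>UNIV. mat 1 $ i $ j * (v j::real)) = (\<Sum>j\<in>UNIV. if i = j then v j else 0)"
    by (rule sum.cong) (auto simp: mat_def)
  then show ?thesis by simp
qed

lemma contraction_zero:
  fixes r :: "real^'d::finite^'d" and w :: "'d \<Rightarrow> real"
  assumes nonneg: "\<And>i j. r$i$j \<ge> 0" and rows: "\<And>i. (\<Sum>j\<in>UNIV. r$i$j) \<le> \<rho>" and rho: "\<rho> < 1"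
    and closed: "\<And>i j. i \<in> R \<Longrightarrow> r$i$j > 0 \<Longrightarrow> j \<in> R"
    and wfx: "\<And>i. i \<in> R \<Longrightarrow> w i = (\<Sum>j\<in>UNIV. r$i$j * w j)"
    and i0: "i0 \<in> R"
  shows "w i0 = 0"
proof -
  have fin: "finite R" by simp
  define \<mu> where "\<mu> = Max ((\<lambda>i. \<bar>w i\<bar>) ` R)"
  have le: "\<bar>w i\<bar> \<le> \<mu>" if "i \<in> R" for i unfolding \<mu>_def using fin that by (intro Max_ge) auto
  have "\<mu> \<in> (\<lambda>i. \<bar>w i\<bar>) ` R" unfolding \<mu>_def using i0 by (intro Max_in) auto
  then obtain im where im: "im \<in> R" "\<bar>w im\<bar> = \<mu>" by auto
  have mu0: "\<mu> \<ge> 0" using le[OF i0] by linarith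
  have "\<mu> = \<bar>\<Sum>j\<in>UNIV. r$im$j * w j\<bar>" using im wfx by simp
  also have "\<dots> \<le> (\<Sum>j\<in>UNIV. \<bar>r$im$j * w j\<bar>)" by (rule sum_abs)
  also have "\<dots> \<le> (\<Sum>j\<in>UNIV. r$im$j * \<mu>)"
  proof (rule sum_mono)
    fix j
    show "\<bar>r$im$j * w j\<bar> \<le> r$im$j * \<mu>"
    proof (cases "r$im$j > 0")
      case True
      then have "j \<in> R" using closed im by blast
      have "\<bar>r$im$j * w j\<bar> = r$im$j * \<bar>w j\<bar>" using True by (simp add: abs_mult)
      also have "\<dots> \<le> r$im$j * \<mu>" using le[OF \<open>j \<in> R\<close>] True by (intro mult_left_mono) auto
      finally show ?thesis .
    next
      case False
      then have "r$im$j = 0" using nonneg[of im j] by simp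
      then show ?thesis by simp
    qed
  qed
  also have "\<dots> = (\<Sum>j\<in>UNIV. r$im$j) * \<mu>" by (simp add: sum_distrib_right)
  also have "\<dots> \<le> \<rho> * \<mu>" using rows mu0 by (intro mult_right_mono) auto
  finally have "\<mu> \<le> \<rho> * \<mu>" .
  then have "(1 - \<rho>) * \<mu> \<le> 0" by (simp add: left_diff_distrib)
  moreover have "0 < 1 - \<rho>" using rho by simp
  ultimately have "\<mu> \<le> 0" by (meson mult_le_0_iff not_le)
  with mu0 have "\<mu> = 0" by simp
  then show ?thesis using le[OF i0] by simp
qed

lemma invertible_I_minus:
  fixes r :: "real^'d::finite^'d"
  assumes nonneg: "\<And>i j. r$i$j \<ge> 0" and rows: "\<And>i. (\<Sum>j\<in>UNIV. r$i$j) \<le> \<rho>" and rho: "\<rho> < 1"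
  shows "(mat 1 - r) ** matrix_inv (mat 1 - r) = mat 1"
proof -
  have "inj ((*v) (mat 1 - r))"
  proof (rule injI)
    fix x y assume eq: "(mat 1 - r) *v x = (mat 1 - r) *v y"
    define v where "v = x - y"
    have z: "(mat 1 - r) *v v = 0" using eq unfolding v_def by (simp add: matrix_vector_mult_diff_distrib)
    have "v $ i = 0" for i
    proof (rule contraction_zero[of r \<rho> UNIV "\<lambda>i. v $ i"])
      fix i
      have "((mat 1 - r) *v v) $ i = 0" using z by simp
      then have "(\<Sum>j\<in>UNIV. (mat 1 $ i $ j - r $ i $ j) * v $ j) = 0"
        by (simp add: matrix_vector_mult_def)
      then have "(\<Sum>j\<in>UNIV. mat 1 $ i $ j * v $ j) - (\<Sum>j\<in>UNIV. r $ i $ j * v $ j) = 0"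
        by (simp add: left_diff_distrib sum_subtractf)
      moreover have "(\<Sum>j\<in>UNIV. mat 1 $ i $ j * v $ j) = v $ i"
        by (rule mat1_sum)
      ultimately show "v $ i = (\<Sum>j\<in>UNIV. r $ i $ j * v $ j)" by simp
    qed (use assms in auto)
    then have "v = 0" by (simp add: vec_eq_iff)
    then show "x = y" unfolding v_def by simp
  qed
  then obtain B where B: "B ** (mat 1 - r) = mat 1" using matrix_left_invertible_injective[THEN iffD2] by blast
  then have "(mat 1 - r) ** B = mat 1" using matrix_left_right_inverse[of "mat 1 - r" B] by simp
  with \<open>B ** (mat 1 - r) = mat 1\<close> have ex: "\<exists>A'. (mat 1 - r) ** A' = mat 1 \<and> A' ** (mat 1 - r) = mat 1" by blast
  show ?thesis unfolding matrix_inv_def using someI_ex[OF ex] by blast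
qed

lemma reach_pos:
  fixes r B :: "real^'d::finite^'d"
  assumes nonneg: "\<And>i j. r$i$j \<ge> 0" and rows: "\<And>i. (\<Sum>j\<in>UNIV. r$i$j) \<le> \<rho>" and rho: "\<rho> < 1"
    and Bnn: "\<And>i j. B$i$j \<ge> 0"
    and pos: "(matrix_inv (mat 1 - r) ** B) $ i $ a > 0"
  shows "\<exists>i'. rreach r i i' \<and> B $ i' $ a > 0"
proof (rule ccontr)
  assume nt: "\<not> ?thesis"
  have B0: "B $ i' $ a = 0" if "rreach r i i'" for i'
  proof -
    have "\<not> B $ i' $ a > 0" using that nt by blast
    then show ?thesis using Bnn[of i' a] by simp
  qed
  define M where "M = matrix_inv (mat 1 - r)"
  have inv: "(mat 1 - r) ** M = mat 1" unfolding M_def by (rule invertible_I_minus[OF assms(1-3)])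
  define w where "w j = (M ** B) $ j $ a" for j
  have eqB: "(mat 1 - r) ** (M ** B) = B" by (simp add: matrix_mul_assoc inv)
  have wfix: "w i' = B $ i' $ a + (\<Sum>j\<in>UNIV. r $ i' $ j * w j)" for i'
  proof -
    have "B $ i' $ a = ((mat 1 - r) ** (M ** B)) $ i' $ a" using eqB by simp
    also have "\<dots> = (\<Sum>j\<in>UNIV. (mat 1 - r) $ i' $ j * w j)"
      unfolding w_def by (rule mmult_entry)
    also have "\<dots> = (\<Sum>j\<in>UNIV. (mat 1 $ i' $ j - r $ i' $ j) * w j)"
      by simp
    also have "\<dots> = (\<Sum>j\<in>UNIV. mat 1 $ i' $ j * w j) - (\<Sum>j\<in>UNIV. r $ i' $ j * w j)"
      by (simp add: left_diff_distrib sum_subtractf)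
    also have "(\<Sum>j\<in>UNIV. mat 1 $ i' $ j * w j) = w i'"
      by (rule mat1_sum)
    finally show ?thesis by simp
  qed
  have "w i = 0"
  proof (rule contraction_zero[of r \<rho> "{i'. rreach r i i'}" w])
    fix i' assume "i' \<in> {i'. rreach r i i'}"
    then show "w i' = (\<Sum>j\<in>UNIV. r $ i' $ j * w j)" using wfix[of i'] B0 by simp
  next
    fix i' j assume "i' \<in> {i'. rreach r i i'}" "r $ i' $ j > 0"
    then show "j \<in> {i'. rreach r i i'}" by (auto intro: rreach.rstep)
  qed (auto intro: assms rreach.rrefl)
  with pos show False unfolding w_def M_def by simp
qed



definition good :: "real \<Rightarrow> 'd::finite env \<Rightarrow> bool" where
  "good \<kappa> \<omega> = (\<forall>n. \<omega> n \<in> Sigma_kappa \<kappa>)"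

lemma good_site:
  assumes "good \<kappa> \<omega>"
  shows "\<omega> x \<in> Sigma_set"
    "\<And>i. (\<Sum>j\<in>UNIV. qm \<omega> x $ i $ j) \<ge> \<kappa>"
    "\<And>i. (\<Sum>j\<in>UNIV. pm \<omega> x $ i $ j) \<ge> \<kappa>"
    "\<And>i j. (matrix_inv (mat 1 - rm \<omega> x) ** qm \<omega> x) $ i $ j \<ge> \<kappa>"
    "\<And>i j. (matrix_inv (mat 1 - rm \<omega> x) ** pm \<omega> x) $ i $ j \<ge> \<kappa>"
proof -
  obtain q r p where e: "\<omega> x = (q, r, p)" by (cases "\<omega> x") auto
  have "(q, r, p) \<in> Sigma_kappa \<kappa>" using assms e unfolding good_def by metis
  then show "\<omega> x \<in> Sigma_set"
    "\<And>i. (\<Sum>j\<in>UNIV. qm \<omega> x $ i $ j) \<ge> \<kappa>"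
    "\<And>i. (\<Sum>j\<in>UNIV. pm \<omega> x $ i $ j) \<ge> \<kappa>"
    "\<And>i j. (matrix_inv (mat 1 - rm \<omega> x) ** qm \<omega> x) $ i $ j \<ge> \<kappa>"
    "\<And>i j. (matrix_inv (mat 1 - rm \<omega> x) ** pm \<omega> x) $ i $ j \<ge> \<kappa>"
    using e by (auto simp: Sigma_kappa_def qm_def rm_def pm_def)
qed

lemma good_SS: "good \<kappa> \<omega> \<Longrightarrow> SS \<omega>"
  unfolding SS_def using good_site(1) by blast

lemma good_rrow:
  assumes "good \<kappa> \<omega>"
  shows "(\<Sum>j\<in>UNIV. rm \<omega> x $ i $ j) \<le> 1 - 2 * \<kappa>"
proof -
  have "(\<Sum>j\<in>UNIV. qm \<omega> x $ i $ j) + (\<Sum>j\<in>UNIV. rm \<omega> x $ i $ j) + (\<Sum>j\<in>UNIV. pm \<omega> x $ i $ j) = 1"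
    using site_rowsum[OF good_SS[OF assms], of x i] by (simp add: sum.distrib)
  then show ?thesis using good_site(2,3)[OF assms, of x i] by linarith
qed

lemma good_reach_q:
  assumes "good \<kappa> \<omega>" "\<kappa> > 0"
  shows "\<exists>i'. rreach (rm \<omega> x) i i' \<and> qm \<omega> x $ i' $ a > 0"
  by (rule reach_pos[of _ "1 - 2 * \<kappa>"])
     (use assms good_site(4)[OF assms(1), of x i a] site_nonneg[OF good_SS[OF assms(1)]] good_rrow[OF assms(1)] in auto)

lemma good_reach_p:
  assumes "good \<kappa> \<omega>" "\<kappa> > 0"
  shows "\<exists>i'. rreach (rm \<omega> x) i i' \<and> pm \<omega> x $ i' $ a > 0"
  by (rule reach_pos[of _ "1 - 2 * \<kappa>"])
     (use assms good_site(5)[OF assms(1), of x i a] site_nonneg[OF good_SS[OF assms(1)]] good_rrow[OF assms(1)] in auto)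

lemma hitp_chain:
  assumes g: "good \<kappa> \<omega>" and kp: "\<kappa> > 0"
  shows "\<exists>C D. C > 0 \<and> (\<forall>n. C * hitp \<omega> (k + 1) n k a b \<le> hitp \<omega> (k + 1 + 1) (n + D) (k + 1) i j)"
proof -
  have S: "SS \<omega>" using g by (rule good_SS)
  obtain i' where ri: "rreach (rm \<omega> (k + 1)) i i'" and qpos: "qm \<omega> (k + 1) $ i' $ a > 0"
    using good_reach_q[OF g kp] by blast
  obtain m1 c1 where c1: "c1 > 0" and H1: "\<forall>n j t. t \<noteq> k + 1 \<longrightarrow> c1 * hitp \<omega> t n (k + 1) i' j \<le> hitp \<omega> t (n + m1) (k + 1) i j"
    using rreach_hitp[OF S ri] by (elim exE conjE)
  obtain b' where rb: "rreach (rm \<omega> (k + 1)) b b'" and ppos: "pm \<omega> (k + 1) $ b' $ j > 0"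
    using good_reach_p[OF g kp] by blast
  obtain m2 c2 where c2: "c2 > 0" and H2: "\<forall>n j t. t \<noteq> k + 1 \<longrightarrow> c2 * hitp \<omega> t n (k + 1) b' j \<le> hitp \<omega> t (n + m2) (k + 1) b j"
    using rreach_hitp[OF S rb] by (elim exE conjE)
  define L where "L = Suc 0 + m2"
  define T where "T = c2 * pm \<omega> (k + 1) $ b' $ j"
  have Tpos: "T > 0" unfolding T_def using c2 ppos by simp
  have tail: "T \<le> hitp \<omega> (k + 1 + 1) L (k + 1) b j"
  proof -
    have "pm \<omega> (k + 1) $ b' $ j * hitp \<omega> (k + 1 + 1) 0 (k + 1 + 1) j j \<le> hitp \<omega> (k + 1 + 1) (Suc 0) (k + 1) b' j"
      by (rule step_p[OF S]) simp
    then have "pm \<omega> (k + 1) $ b' $ j \<le> hitp \<omega> (k + 1 + 1) (Suc 0) (k + 1) b' j" by simp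
    then have "T \<le> c2 * hitp \<omega> (k + 1 + 1) (Suc 0) (k + 1) b' j"
      unfolding T_def using c2 by (intro mult_left_mono) auto
    also have "\<dots> \<le> hitp \<omega> (k + 1 + 1) L (k + 1) b j" unfolding L_def by (rule H2[rule_format]) simp
    finally show ?thesis .
  qed
  define C where "C = c1 * qm \<omega> (k + 1) $ i' $ a * T"
  have Cpos: "C > 0" unfolding C_def using c1 qpos Tpos by simp
  show ?thesis
  proof (intro exI conjI allI)
    show "C > 0" by (rule Cpos)
    fix n
    have h0: "0 \<le> hitp \<omega> (k + 1) n k a b" by (rule hitp_nonneg[OF S])
    have "C * hitp \<omega> (k + 1) n k a b = c1 * (qm \<omega> (k + 1) $ i' $ a * (hitp \<omega> (k + 1) n k a b * T))"
      unfolding C_def by (simp add: algebra_simps)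
    also have "\<dots> \<le> c1 * (qm \<omega> (k + 1) $ i' $ a * (hitp \<omega> (k + 1) n k a b * hitp \<omega> (k + 1 + 1) L (k + 1) b j))"
      using c1 qpos h0 tail by (intro mult_left_mono) auto
    also have "\<dots> \<le> c1 * (qm \<omega> (k + 1) $ i' $ a * hitp \<omega> (k + 1 + 1) (n + L) k a j)"
      using c1 qpos hitp_comp[OF S, of "k + 1" "k + 1 + 1" k n a b L j] by (intro mult_left_mono) auto
    also have "\<dots> \<le> c1 * hitp \<omega> (k + 1 + 1) (Suc (n + L)) (k + 1) i' j"
      using c1 step_q[OF S, of "k + 1" "k + 1 + 1" i' a "n + L" j] by (intro mult_left_mono) auto
    also have "\<dots> \<le> hitp \<omega> (k + 1 + 1) (Suc (n + L) + m1) (k + 1) i j"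
      by (rule H1[rule_format]) simp
    also have "Suc (n + L) + m1 = n + (Suc (L + m1))" by simp
    finally show "C * hitp \<omega> (k + 1) n k a b \<le> hitp \<omega> (k + 1 + 1) (n + Suc (L + m1)) (k + 1) i j" .
  qed
qed

lemma Phi_prop:
  assumes g: "good \<kappa> \<omega>" and kp: "\<kappa> > 0" and inf: "Phi \<omega> k lam a b = \<infinity>"
  shows "Phi \<omega> (k + 1) lam i j = \<infinity>"
proof -
  have S: "SS \<omega>" using g by (rule good_SS)
  obtain C D where C: "C > 0" and H: "\<And>n. C * hitp \<omega> (k + 1) n k a b \<le> hitp \<omega> (k + 1 + 1) (n + D) (k + 1) i j"
    using hitp_chain[OF g kp, of k a b i j] by blast
  define f where "f N = ennreal (exp (lam * real N) * hitp \<omega> (k + 1 + 1) N (k + 1) i j)" for N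
  define g where "g n = ennreal (exp (lam * real n) * hitp \<omega> (k + 1) n k a b)" for n
  define K where "K = exp (lam * real D) * C"
  have Kpos: "K > 0" unfolding K_def using C by simp
  have "ennreal K * g n \<le> f (n + D)" for n
  proof -
    have h0: "0 \<le> hitp \<omega> (k + 1) n k a b" by (rule hitp_nonneg[OF S])
    have "K * (exp (lam * real n) * hitp \<omega> (k + 1) n k a b)
        = exp (lam * real (n + D)) * (C * hitp \<omega> (k + 1) n k a b)"
      unfolding K_def by (simp add: algebra_simps exp_add[symmetric] distrib_left)
    also have "\<dots> \<le> exp (lam * real (n + D)) * hitp \<omega> (k + 1 + 1) (n + D) (k + 1) i j"
      using H[of n] by (intro mult_left_mono) auto
    finally have "K * (exp (lam * real n) * hitp \<omega> (k + 1) n k a b)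
        \<le> exp (lam * real (n + D)) * hitp \<omega> (k + 1 + 1) (n + D) (k + 1) i j" .
    then show ?thesis unfolding f_def g_def using Kpos h0
      by (simp add: ennreal_mult[symmetric] ennreal_leI)
  qed
  then have "(\<Sum>n. ennreal K * g n) \<le> (\<Sum>n. f (n + D))"
    by (intro suminf_le) auto
  also have "\<dots> \<le> suminf f"
    using suminf_offset[of f D] by (simp add: add_increasing2)
  finally have le: "ennreal K * suminf g \<le> suminf f" by simp
  have "suminf g = \<infinity>" using inf unfolding g_def Phi_def by simp
  then have "ennreal K * suminf g = \<infinity>" using Kpos by (simp add: ennreal_mult_top)
  with le have "suminf f = \<infinity>" by (simp add: top_unique)
  then show ?thesis unfolding f_def Phi_def by simp
qed

lemma Phi_zero_le1:
  assumes S: "SS \<omega>"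
  shows "Phi \<omega> k 0 i j \<le> 1"
proof -
  have "(\<Sum>n. ennreal (exp (0 * real n) * hitp \<omega> (k + 1) n k i j)) \<le> 1"
  proof (rule suminf_le_const)
    fix N
    have "(\<Sum>n<N. ennreal (exp (0 * real n) * hitp \<omega> (k + 1) n k i j)) = ennreal (\<Sum>n<N. hitp \<omega> (k + 1) n k i j)"
      using hitp_nonneg[OF S] by simp
    also have "(\<Sum>n<N. hitp \<omega> (k + 1) n k i j) \<le> (\<Sum>n<N. \<Sum>j\<in>UNIV. hitp \<omega> (k + 1) n k i j)"
      using hitp_nonneg[OF S] by (intro sum_mono member_le_sum) auto
    also have "\<dots> \<le> 1" by (rule hitp_sum_le1[OF S])
    finally show "(\<Sum>n<N. ennreal (exp (0 * real n) * hitp \<omega> (k + 1) n k i j)) \<le> 1"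
      by (simp add: ennreal_leI)
  qed auto
  then show ?thesis unfolding Phi_def .
qed

lemma Phi_mono:
  assumes S: "SS \<omega>" and "lam \<le> lam'"
  shows "Phi \<omega> k lam i j \<le> Phi \<omega> k lam' i j"
  unfolding Phi_def
proof (intro suminf_le allI)
  fix n
  show "ennreal (exp (lam * real n) * hitp \<omega> (k + 1) n k i j) \<le> ennreal (exp (lam' * real n) * hitp \<omega> (k + 1) n k i j)"
    using assms hitp_nonneg[OF S, of "k + 1" n k i j]
    by (intro ennreal_leI mult_right_mono) (auto intro: mult_right_mono)
qed auto

lemma Phi_shift: "Phi \<omega> k lam i j = Phi (\<lambda>m. \<omega> (m + k)) 0 lam i j"
  unfolding Phi_def using hitp_shift[of \<omega> 1 k _ 0 i j] by (simp add: add.commute)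



lemma meas_site: "(\<lambda>\<omega>::'d::finite env. g (\<omega> x)) \<in> borel_measurable env_space"
  if "continuous_on UNIV (g :: 'd site \<Rightarrow> real)"
  unfolding env_space_def
  apply (rule measurable_compose[where f="\<lambda>\<omega>. \<omega> x" and N=borel])
   apply (rule measurable_component_singleton, simp)
  by (rule borel_measurable_continuous_onI[OF that])
lemma cont1: "continuous_on UNIV (\<lambda>s::'d::finite site. fst s $ i $ j)"
  by (intro continuous_intros)
lemma cont2: "continuous_on UNIV (\<lambda>s::'d::finite site. fst (snd s) $ i $ j)"
  by (intro continuous_intros)
lemma cont3: "continuous_on UNIV (\<lambda>s::'d::finite site. snd (snd s) $ i $ j)"
  by (intro continuous_intros)
lemma mq: "(\<lambda>\<omega>::'d::finite env. qm \<omega> x $ i $ j) \<in> borel_measurable env_space"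
  unfolding qm_def by (rule meas_site[OF cont1])
lemma mr: "(\<lambda>\<omega>::'d::finite env. rm \<omega> x $ i $ j) \<in> borel_measurable env_space"
  unfolding rm_def by (rule meas_site[OF cont2])
lemma mp: "(\<lambda>\<omega>::'d::finite env. pm \<omega> x $ i $ j) \<in> borel_measurable env_space"
  unfolding pm_def by (rule meas_site[OF cont3])
lemma mhitp: "(\<lambda>\<omega>. hitp \<omega> t n x i j) \<in> borel_measurable env_space"
proof (induction n arbitrary: x i)
  case 0 then show ?case by simp
next
  case (Suc n)
  show ?case
  proof (cases "x = t")
    case False
    then show ?thesis
      by (simp, intro borel_measurable_sum borel_measurable_add borel_measurable_times Suc mq mr mp)
  qed simp
qed
lemma mPhi: "(\<lambda>\<omega>. Phi \<omega> k lam i j) \<in> borel_measurable env_space"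
  unfolding Phi_def using mhitp by measurable

definition Sh :: "int \<Rightarrow> 'd env \<Rightarrow> 'd env" where "Sh k \<omega> = (\<lambda>m. \<omega> (m + k))"

lemma space_env: "space (env_space :: 'd::finite env measure) = UNIV"
  by (simp add: env_space_def space_PiM)

lemma Sh_meas: "Sh k \<in> measurable (env_space :: 'd::finite env measure) env_space"
  unfolding env_space_def Sh_def
  by (rule measurable_PiM_single'[where f="\<lambda>i \<omega>. \<omega> (i + k)"])
     (auto intro: measurable_component_singleton simp: space_PiM)

lemma Sh_comp: "Sh a (Sh b \<omega>) = Sh (a + b) \<omega>"
  by (simp add: Sh_def add.assoc add.commute[of a b])

lemma Phi_Sh: "Phi (Sh m \<omega>) k lam i j = Phi \<omega> (k + m) lam i j"
proof -
  have "Phi (Sh m \<omega>) k lam i j = Phi (Sh k (Sh m \<omega>)) 0 lam i j"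
    using Phi_shift[of "Sh m \<omega>" k] by (simp add: Sh_def)
  also have "\<dots> = Phi (Sh (k + m) \<omega>) 0 lam i j" by (simp add: Sh_comp)
  also have "\<dots> = Phi \<omega> (k + m) lam i j"
    using Phi_shift[of \<omega> "k + m"] by (simp add: Sh_def)
  finally show ?thesis .
qed



theorem mainTheorem5:
  fixes \<eta> :: "'d::finite env measure" and \<kappa> :: real
  assumes "prob_space \<eta>"
    and "sets \<eta> = sets env_space"
    and A1: "stationary_ergodic \<eta>"
    and A2: "\<kappa> > 0" "AE \<omega> in \<eta>. \<forall>n. \<omega> n \<in> Sigma_kappa \<kappa>"
  shows "lambda_crit \<eta> \<ge> 0
     \<and> (\<forall>lam. ereal lam < lambda_crit \<eta> \<longrightarrow>
           (AE \<omega> in \<eta>. \<forall>k i j. Phi \<omega> k lam i j < \<infinity>))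
     \<and> (\<forall>lam. ereal lam > lambda_crit \<eta> \<longrightarrow>
           (AE \<omega> in \<eta>. \<forall>k i j. Phi \<omega> k lam i j = \<infinity>))"
proof -
  interpret P: prob_space \<eta> by fact
  note sets_eq = assms(2)
  have sp: "space \<eta> = UNIV" using sets_eq_imp_space_eq[OF sets_eq] space_env by simp
  have Shm: "Sh k \<in> measurable \<eta> \<eta>" for k
    using Sh_meas measurable_cong_sets[OF sets_eq sets_eq] by blast
  have shift_eq: "shift = Sh 1" by (simp add: fun_eq_iff shift_def Sh_def)
  from A1 have shm: "shift \<in> measurable \<eta> \<eta>" and dsh: "distr \<eta> \<eta> shift = \<eta>"
    and erg: "\<And>A. A \<in> sets \<eta> \<Longrightarrow> shift -` A \<inter> space \<eta> = A \<Longrightarrow> measure \<eta> A = 0 \<or> measure \<eta> A = 1"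
    unfolding stationary_ergodic_def by auto
  have dnat: "distr \<eta> \<eta> (Sh (int m)) = \<eta>" for m
  proof (induction m)
    case 0
    have "Sh 0 = (\<lambda>\<omega>::'d env. \<omega>)" by (simp add: Sh_def fun_eq_iff)
    then show ?case by simp
  next
    case (Suc m)
    have eq: "Sh (int (Suc m)) = shift \<circ> Sh (int m)"
      by (simp add: fun_eq_iff shift_eq Sh_comp add.commute)
    have "distr \<eta> \<eta> (Sh (int (Suc m))) = distr \<eta> \<eta> (shift \<circ> Sh (int m))"
      by (simp only: eq)
    also have "\<dots> = distr (distr \<eta> \<eta> (Sh (int m))) \<eta> shift"
      by (rule distr_distr[OF shm Shm[of "int m"], symmetric])
    also have "\<dots> = \<eta>" using Suc dsh by simp
    finally show ?case .
  qed
  have dall: "distr \<eta> \<eta> (Sh k) = \<eta>" for k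
  proof (cases "k \<ge> 0")
    case True
    then have "k = int (nat k)" by simp
    then show ?thesis using dnat[of "nat k"] by metis
  next
    case False
    then obtain m where km: "k = - int m" by (metis int_nat_eq minus_minus nat_0_le neg_0_le_iff_le not_le of_nat_0_le_iff order.strict_implies_order)
    have id: "Sh k \<circ> Sh (int m) = (\<lambda>\<omega>. \<omega>)" by (simp add: fun_eq_iff Sh_comp km Sh_def)
    have "distr \<eta> \<eta> (Sh k) = distr (distr \<eta> \<eta> (Sh (int m))) \<eta> (Sh k)" using dnat[of m] by simp
    also have "\<dots> = distr \<eta> \<eta> (Sh k \<circ> Sh (int m))" by (rule distr_distr[OF Shm Shm])
    also have "\<dots> = \<eta>" unfolding id by simp
    finally show ?thesis .
  qed
  have AEsh: "AE \<omega> in \<eta>. Q (Sh k \<omega>)" if "AE \<omega> in \<eta>. Q \<omega>" for Q k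
  proof -
    have "AE \<omega> in distr \<eta> \<eta> (Sh k). Q \<omega>" unfolding dall[of k] by (rule that)
    then show ?thesis by (rule AE_distrD[OF Shm])
  qed
  have AEgood: "AE \<omega> in \<eta>. good \<kappa> \<omega>" using A2(2) by (simp add: good_def)
  let ?L = "{ereal lam | lam. AE \<omega> in \<eta>. Max (range (\<lambda>i. \<Sum>j\<in>UNIV. Phi \<omega> 0 lam i j)) < \<infinity>}"
  have Maxfin: "Max (range (\<lambda>i. \<Sum>j\<in>UNIV. Phi \<omega> 0 lam i j)) < \<infinity>" if "\<And>i j. Phi \<omega> 0 lam i j < \<infinity>" for \<omega> lam
    using that by simp
  have fin0: "AE \<omega> in \<eta>. Max (range (\<lambda>i. \<Sum>j\<in>UNIV. Phi \<omega> 0 0 i j)) < \<infinity>"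
    using AEgood
  proof eventually_elim
    case (elim \<omega>)
    show ?case
    proof (rule Maxfin)
      fix i j
      show "Phi \<omega> 0 0 i j < \<infinity>"
        using Phi_zero_le1[OF good_SS[OF elim], of 0 i j] by (simp add: le_less_trans)
    qed
  qed
  have crit0: "lambda_crit \<eta> \<ge> 0"
  proof -
    have "ereal 0 \<in> ?L" using fin0 by blast
    then have "ereal 0 \<le> Sup ?L" by (rule Sup_upper)
    then show ?thesis unfolding lambda_crit_def by (simp add: zero_ereal_def)
  qed
  have part2: "AE \<omega> in \<eta>. \<forall>k i j. Phi \<omega> k lam i j < \<infinity>" if lt: "ereal lam < lambda_crit \<eta>" for lam
  proof -
    obtain x where "x \<in> ?L" "ereal lam < x" using lt less_Sup_iff unfolding lambda_crit_def by blast
    then obtain lam' where lam': "AE \<omega> in \<eta>. Max (range (\<lambda>i. \<Sum>j\<in>UNIV. Phi \<omega> 0 lam' i j)) < \<infinity>"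
      and ll: "lam < lam'" by auto
    have Q: "AE \<omega> in \<eta>. \<forall>i j. Phi \<omega> 0 lam i j < \<infinity>"
      using lam' AEgood
    proof eventually_elim
      case (elim \<omega>)
      show ?case
      proof (intro allI)
        fix i j
        have "Phi \<omega> 0 lam i j \<le> Phi \<omega> 0 lam' i j"
          using Phi_mono[OF good_SS[OF elim(2)]] ll by simp
        also have "\<dots> \<le> (\<Sum>j\<in>UNIV. Phi \<omega> 0 lam' i j)" by (rule member_le_sum) auto
        also have "\<dots> \<le> Max (range (\<lambda>i. \<Sum>j\<in>UNIV. Phi \<omega> 0 lam' i j))" by (rule Max_ge) auto
        finally show "Phi \<omega> 0 lam i j < \<infinity>" using elim(1) by (rule le_less_trans)
      qed
    qed
    have "AE \<omega> in \<eta>. \<forall>i j. Phi \<omega> k lam i j < \<infinity>" for k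
      using AEsh[OF Q, of k] by (simp add: Phi_Sh)
    then show ?thesis by (simp add: AE_all_countable)
  qed
  have part3: "AE \<omega> in \<eta>. \<forall>k i j. Phi \<omega> k lam i j = \<infinity>" if gt: "ereal lam > lambda_crit \<eta>" for lam
  proof -
    have notAE: "\<not> (AE \<omega> in \<eta>. Max (range (\<lambda>i. \<Sum>j\<in>UNIV. Phi \<omega> 0 lam i j)) < \<infinity>)"
    proof
      assume "AE \<omega> in \<eta>. Max (range (\<lambda>i. \<Sum>j\<in>UNIV. Phi \<omega> 0 lam i j)) < \<infinity>"
      then have "ereal lam \<in> ?L" by blast
      then have "ereal lam \<le> Sup ?L" by (rule Sup_upper)
      with gt show False unfolding lambda_crit_def by simp
    qed
    have mPhiE[measurable]: "(\<lambda>\<omega>. Phi \<omega> k lam i j) \<in> borel_measurable \<eta>" for k i j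
      using mPhi measurable_cong_sets[OF sets_eq refl] by blast
    define A0 where "A0 = {\<omega> \<in> space \<eta>. \<exists>i j. Phi \<omega> 0 lam i j = \<infinity>}"
    define C where "C m = {\<omega> \<in> space \<eta>. \<exists>k. k \<le> m \<and> (\<exists>i j. Phi \<omega> k lam i j = \<infinity>)}" for m :: int
    define B where "B = {\<omega> \<in> space \<eta>. \<exists>k i j. Phi \<omega> k lam i j = \<infinity>}"
    have A0m: "A0 \<in> sets \<eta>" unfolding A0_def by measurable
    have Cm: "C m \<in> sets \<eta>" for m unfolding C_def by measurable
    have Bm: "B \<in> sets \<eta>" unfolding B_def by measurable
    have A0pos: "emeasure \<eta> A0 \<noteq> 0"
    proof
      assume "emeasure \<eta> A0 = 0"
      then have "AE \<omega> in \<eta>. \<not> (\<exists>i j. Phi \<omega> 0 lam i j = \<infinity>)"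
        using AE_iff_measurable[OF A0m, of "\<lambda>\<omega>. \<not> (\<exists>i j. Phi \<omega> 0 lam i j = \<infinity>)"] unfolding A0_def by simp
      then have "AE \<omega> in \<eta>. Max (range (\<lambda>i. \<Sum>j\<in>UNIV. Phi \<omega> 0 lam i j)) < \<infinity>"
        by eventually_elim (rule Maxfin, simp add: less_top[symmetric])
      with notAE show False by simp
    qed
    have Csh: "Sh m -` C 0 \<inter> space \<eta> = C m" for m
    proof (intro set_eqI iffI)
      fix \<omega> assume "\<omega> \<in> Sh m -` C 0 \<inter> space \<eta>"
      then obtain k i j where "k \<le> 0" "Phi (Sh m \<omega>) k lam i j = \<infinity>" unfolding C_def by auto
      then have "k + m \<le> m" "Phi \<omega> (k + m) lam i j = \<infinity>" by (auto simp: Phi_Sh)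
      then show "\<omega> \<in> C m" unfolding C_def using sp by blast
    next
      fix \<omega> assume "\<omega> \<in> C m"
      then obtain k i j where "k \<le> m" "Phi \<omega> k lam i j = \<infinity>" unfolding C_def by auto
      then have "k - m \<le> 0" "Phi (Sh m \<omega>) (k - m) lam i j = \<infinity>" by (auto simp: Phi_Sh)
      then show "\<omega> \<in> Sh m -` C 0 \<inter> space \<eta>" unfolding C_def using sp by blast
    qed
    have Ceq: "emeasure \<eta> (C m) = emeasure \<eta> (C 0)" for m
      using emeasure_distr[OF Shm[of m] Cm[of 0]] dall[of m] Csh[of m] by simp
    have Bun: "B = (\<Union>n. C (int n))"
    proof (intro set_eqI iffI)
      fix \<omega> assume "\<omega> \<in> B"
      then obtain k i j where "\<omega> \<in> space \<eta>" "Phi \<omega> k lam i j = \<infinity>" unfolding B_def by auto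
      moreover have "k \<le> int (nat k)" by simp
      ultimately show "\<omega> \<in> (\<Union>n. C (int n))" unfolding C_def by blast
    qed (auto simp: B_def C_def)
    have incC: "incseq (\<lambda>n. C (int n))"
      unfolding incseq_def
    proof (intro allI impI subsetI)
      fix m n :: nat and \<omega> assume mn: "m \<le> n" and "\<omega> \<in> C (int m)"
      then obtain k i j where w: "\<omega> \<in> space \<eta>" and kk: "k \<le> int m" and ph: "Phi \<omega> k lam i j = \<infinity>"
        unfolding C_def by auto
      have "k \<le> int n" using kk mn by linarith
      then show "\<omega> \<in> C (int n)" unfolding C_def using w ph by blast
    qed
    have "emeasure \<eta> B = (SUP n. emeasure \<eta> (C (int n)))"
      unfolding Bun by (rule SUP_emeasure_incseq[symmetric]) (use Cm incC in auto)
    also have "\<dots> = (SUP n::nat. emeasure \<eta> (C 0))" by (intro SUP_cong refl Ceq)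
    also have "\<dots> = emeasure \<eta> (C 0)" by simp
    finally have BC: "emeasure \<eta> B = emeasure \<eta> (C 0)" .
    have "A0 \<subseteq> C 0" unfolding A0_def C_def by auto
    then have "emeasure \<eta> A0 \<le> emeasure \<eta> (C 0)" by (rule emeasure_mono) (rule Cm)
    then have "emeasure \<eta> B \<noteq> 0" using A0pos BC by auto
    then have "measure \<eta> B \<noteq> 0" using P.emeasure_eq_measure[of B] by auto
    moreover have "shift -` B \<inter> space \<eta> = B"
    proof (intro set_eqI iffI)
      fix \<omega> assume "\<omega> \<in> shift -` B \<inter> space \<eta>"
      then obtain k i j where "Phi (Sh 1 \<omega>) k lam i j = \<infinity>" unfolding B_def shift_eq by auto
      then show "\<omega> \<in> B" unfolding B_def using sp by (auto simp: Phi_Sh)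
    next
      fix \<omega> assume "\<omega> \<in> B"
      then obtain k i j where "Phi \<omega> k lam i j = \<infinity>" unfolding B_def by auto
      then have "Phi (Sh 1 \<omega>) (k - 1) lam i j = \<infinity>" by (simp add: Phi_Sh)
      then show "\<omega> \<in> shift -` B \<inter> space \<eta>" unfolding B_def shift_eq using sp by blast
    qed
    ultimately have "measure \<eta> B = 1" using erg[OF Bm] by blast
    then have "emeasure \<eta> B = 1" using P.emeasure_eq_measure[of B] by simp
    then have "emeasure \<eta> (C m) = 1" for m using BC Ceq[of m] by simp
    then have "P.prob (C m) = 1" for m using P.emeasure_eq_measure[of "C m"] by simp
    then have "AE \<omega> in \<eta>. \<omega> \<in> C m" for m using P.AE_in_set_eq_1[OF Cm] by simp
    then have "AE \<omega> in \<eta>. \<forall>m. \<omega> \<in> C m" by (simp add: AE_all_countable)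
    with AEgood show ?thesis
    proof eventually_elim
      case (elim \<omega>)
      show ?case
      proof (intro allI)
        fix k i j
        from elim(2) have "\<omega> \<in> C (k - 1)" by blast
        then obtain k0 a b where k0: "k0 \<le> k - 1" and inf: "Phi \<omega> k0 lam a b = \<infinity>" unfolding C_def by auto
        have all: "\<forall>i j. Phi \<omega> (k0 + 1 + int d) lam i j = \<infinity>" for d
        proof (induction d)
          case 0
          show ?case using Phi_prop[OF elim(1) A2(1) inf] by simp
        next
          case (Suc d)
          then have "Phi \<omega> (k0 + 1 + int d) lam a b = \<infinity>" by blast
          from Phi_prop[OF elim(1) A2(1) this] show ?case by (simp add: add.assoc)
        qed
        have "k0 + 1 + int (nat (k - k0 - 1)) = k" using k0 by simp
        then show "Phi \<omega> k lam i j = \<infinity>" using all[of "nat (k - k0 - 1)"] by metis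
      qed
    qed
  qed
  show ?thesis using crit0 part2 part3 by blast
qed

end
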